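(* (Copy.) There exists an $n$-RASP-L program with $T(n)=n$ that solves the $n$-symbol copy task: for every $n\ge 1$, every $n'\ge n-1$ and every binary sequence $x_1,\dots,x_n\in\{0,1\}$, the program maps the input sequence $$x_1\,\dots\,x_n\;\texttt{>}\;\underbrace{\texttt{\#}\,\dots\,\texttt{\#}}_{n'}$$ (of length $n+1+n'$) to an output sequence of the same length of the form $$\underbrace{*\,\dots\,*}_{n}\;x_1\,\dots\,x_n\;\underbrace{\texttt{\#}\,\dots\,\texttt{\#}}_{n'-n+1}.$$
   Context: Tokens: $\texttt{>}$ is a special end-of-query (EOQ) token, $\texttt{\#}$ is a special end-of-sequence (EOS) token, and $*$ in the output denotes a position whose value is ignored (any value is allowed there). RASP-L is a restricted programming language modelling decoder-only (causal) Transformers. A RASP-L program takes an integer-token sequence of arbitrary length and returns a sequence of the same length. It is straight-line code (no branching, no loops), each line being a call to a core primitive or to another RASP-L program. Core primitives: $\mathrm{indices}(x)$ (the sequence $0,1,\dots,|x|-1$); $\mathrm{full}(x,c)$ (constant sequence); elementwise maps applying a fixed function to the tokens at each position of one or more sequences; and the causal attention operation $\mathrm{kqv}(k,q,v,\mathrm{pred},\mathrm{default})$, whose output at position $i$ is the (integer-truncated) mean of $v_j$ over all $j\le i$ with $\mathrm{pred}(k_j,q_i)$ true, or $\mathrm{default}$ if no such $j$ exists. Operations on token indices are restricted to order comparisons and successor/predecessor (e.g. $\mathrm{indices}(x)+1$); arbitrary index arithmetic is not allowed. For example, shifting a sequence right by one position is $\mathrm{kqv}(\mathrm{indices}(x)+1,\mathrm{indices}(x),x,=,0)$.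 An $n$-RASP-L program is a program $P$ for which there exist a function $T:\mathbb{N}\to\mathbb{N}$ and a RASP-L program $P'$ such that, on inputs of problem size $n$, $P$ consists of the sequential application of $P'$ for $T(n)$ steps (the paper allows fixed RASP-L pre-processing and post-processing steps, e.g. handling EOS/EOQ tokens, outside this loop). *)

theory Defs
  imports Main
begin

text \<open>Bits are the integers 0 and 1; the special end-of-query token and the
end-of-sequence token are encoded by the integers 2 and 3.\<close>

definition eoq :: int where "eoq = 2"
definition eos :: int where "eos = 3"

text \<open>Variable 0 is the input sequence;
the k-th instruction (k starting at 0) defines variable k+1 and may refer only
to variables 0..k.  Calls to other
RASP-L programs are represented by inlining (straight-line code).\<close>

datatype instr =
    Idx nat
  | Full nat int
  | Succ nat
  | Pred nat
  | MapN "int list \<Rightarrow> int" "nat list"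
  | KQV nat nat nat "int \<Rightarrow> int \<Rightarrow> bool" int

text \<open>Index-derived
sequences may only be shifted by successor/predecessor and compared via order
comparisons inside kqv; they can never be fed to maps or used as values.\<close>

datatype sort = TokS | IdxS

definition order_preds :: "(int \<Rightarrow> int \<Rightarrow> bool) set" where
  "order_preds = {(\<lambda>a b. a = b), (\<lambda>a b. a \<noteq> b), (\<lambda>a b. a < b),
                  (\<lambda>a b. a \<le> b), (\<lambda>a b. a > b), (\<lambda>a b. a \<ge> b)}"

fun instr_sort :: "sort list \<Rightarrow> instr \<Rightarrow> sort option" where
  "instr_sort ss (Idx i) = (if i < length ss then Some IdxS else None)"
| "instr_sort ss (Full i c) = (if i < length ss then Some TokS else None)"
| "instr_sort ss (Succ i) = (if i < length ss \<and> ss ! i = IdxS then Some IdxS else None)"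
| "instr_sort ss (Pred i) = (if i < length ss \<and> ss ! i = IdxS then Some IdxS else None)"
| "instr_sort ss (MapN f is) =
     (if is \<noteq> [] \<and> (\<forall>i\<in>set is. i < length ss \<and> ss ! i = TokS) then Some TokS else None)"
| "instr_sort ss (KQV k q v p d) =
     (if k < length ss \<and> q < length ss \<and> v < length ss \<and> ss ! v = TokS \<and>
         ((ss ! k = IdxS \<or> ss ! q = IdxS) \<longrightarrow> p \<in> order_preds)
      then Some TokS else None)"

fun wf_from :: "sort list \<Rightarrow> instr list \<Rightarrow> bool" where
  "wf_from ss [] = (last ss = TokS)"
| "wf_from ss (c # cs) =
     (case instr_sort ss c of None \<Rightarrow> False | Some s \<Rightarrow> wf_from (ss @ [s]) cs)"

definition rasp_l :: "instr list \<Rightarrow> bool" where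
  "rasp_l P \<longleftrightarrow> wf_from [TokS] P"

definition trunc_div :: "int \<Rightarrow> int \<Rightarrow> int" where
  "trunc_div a b = (if a \<ge> 0 then a div b else - ((- a) div b))"

fun exec_instr :: "int list list \<Rightarrow> instr \<Rightarrow> int list" where
  "exec_instr env (Idx i) = map int [0..<length (env ! i)]"
| "exec_instr env (Full i c) = replicate (length (env ! i)) c"
| "exec_instr env (Succ i) = map (\<lambda>a. a + 1) (env ! i)"
| "exec_instr env (Pred i) = map (\<lambda>a. a - 1) (env ! i)"
| "exec_instr env (MapN f is) =
     map (\<lambda>j. f (map (\<lambda>i. env ! i ! j) is)) [0..<length (env ! hd is)]"
| "exec_instr env (KQV k q v p d) =
     map (\<lambda>i. let S = {j. j \<le> i \<and> p (env ! k ! j) (env ! q ! i)} in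
               if S = {} then d else trunc_div (\<Sum>j\<in>S. env ! v ! j) (int (card S)))
         [0..<length (env ! q)]"

definition run :: "instr list \<Rightarrow> int list \<Rightarrow> int list" where
  "run P x = last (fold (\<lambda>c env. env @ [exec_instr env c]) P [x])"

end

theory Submission
  imports Defs
begin
definition g :: "int \<Rightarrow> int" where "g a = (if a = eoq then eos else a)"
definition stp :: "instr list" where
 "stp = [Idx 0, Succ 1, KQV 2 1 0 (\<lambda>a b. a = b) 0, MapN (\<lambda>l. g (hd l)) [3]]"

lemma wf_stp: "rasp_l stp"
  by (simp add: rasp_l_def stp_def order_preds_def)

lemma setS: "i < L \<Longrightarrow> {j. j \<le> i \<and> map ((\<lambda>a. a + 1) \<circ> int) [0..<L] ! j = int i} = (if i = 0 then {} else {i - 1})"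
  by auto

lemma allpred: "(\<forall>x\<le>i. int x + 1 \<noteq> int i) = (i = 0)"
  by (cases i) auto

lemma run_stp: "run stp ys = map (\<lambda>i. if i = 0 then 0 else g (ys!(i-1))) [0..<length ys]"
  apply (rule nth_equalityI)
   apply (simp add: run_def stp_def)
  apply (auto simp add: run_def stp_def setS allpred trunc_div_def g_def eoq_def eos_def Let_def simp del: upt_Suc)
  done

lemma gg: "g (g a) = g a" by (simp add: g_def eoq_def eos_def)

lemma len_stp[simp]: "length (run stp ys) = length ys" by (simp add: run_stp)

lemma stp_nth: "1 \<le> p \<Longrightarrow> p < length zs \<Longrightarrow> run stp zs ! p = g (zs ! (p - 1))"
  by (simp add: run_stp)

lemma iter: "length ((run stp ^^ k) ys) = length ys \<and>
  (\<forall>p. 1 \<le> k \<longrightarrow> k \<le> p \<longrightarrow> p < length ys \<longrightarrow> ((run stp ^^ k) ys) ! p = g (ys ! (p - k)))"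
proof (induction k)
  case 0 then show ?case by simp
next
  case (Suc k)
  show ?case
  proof (intro conjI allI impI)
    show "length ((run stp ^^ Suc k) ys) = length ys" using Suc by simp
    fix p assume p: "1 \<le> Suc k" "Suc k \<le> p" "p < length ys"
    have "((run stp ^^ Suc k) ys) ! p = g (((run stp ^^ k) ys) ! (p - 1))"
      using p Suc.IH by (simp add: stp_nth del: len_stp)
    also have "\<dots> = g (ys ! (p - Suc k))"
    proof (cases k)
      case 0 then show ?thesis by simp
    next
      case (Suc m) then show ?thesis using Suc.IH p by (simp add: gg)
    qed
    finally show "((run stp ^^ Suc k) ys) ! p = g (ys ! (p - Suc k))" .
  qed
qed

theorem proposition2:
  shows "\<exists>pre step post.
     rasp_l pre \<and> rasp_l step \<and> rasp_l post \<and>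
     (\<forall>(n::nat) (n'::nat) (xs::int list).
        n \<ge> 1 \<longrightarrow> n' + 1 \<ge> n \<longrightarrow> length xs = n \<longrightarrow> set xs \<subseteq> {0, 1} \<longrightarrow>
        (let out = run post ((run step ^^ n) (run pre (xs @ [eoq] @ replicate n' eos)))
         in length out = n + 1 + n' \<and> drop n out = xs @ replicate (n' + 1 - n) eos))"
proof (rule exI[where x="[]"], rule exI[where x=stp], rule exI[where x="[]"], intro conjI allI impI)
  show "rasp_l []" by (simp add: rasp_l_def)
  show "rasp_l []" by (simp add: rasp_l_def)
  show "rasp_l stp" by (rule wf_stp)
  fix n n' :: nat and xs :: "int list"
  assume n: "1 \<le> n" "n \<le> n' + 1" "length xs = n" "set xs \<subseteq> {0, 1}"
  have r0: "run [] x = x" for x by (simp add: run_def)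
  define ys where "ys = xs @ [eoq] @ replicate n' eos"
  have ly: "length ys = n + 1 + n'" using n by (simp add: ys_def)
  have I: "length ((run stp ^^ n) ys) = length ys"
      "\<And>p. n \<le> p \<Longrightarrow> p < length ys \<Longrightarrow> ((run stp ^^ n) ys) ! p = g (ys ! (p - n))"
    using iter[of n ys] n by auto
  have "drop n ((run stp ^^ n) ys) = xs @ replicate (n' + 1 - n) eos"
  proof (rule nth_equalityI)
    show "length (drop n ((run stp ^^ n) ys)) = length (xs @ replicate (n' + 1 - n) eos)"
      using I ly n by simp
    fix q assume q: "q < length (drop n ((run stp ^^ n) ys))"
    then have q': "q < n' + 1" using I ly by simp
    have "drop n ((run stp ^^ n) ys) ! q = g (ys ! q)" using I(2)[of "n + q"] I(1) q' ly by simp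
    also have "\<dots> = (xs @ replicate (n' + 1 - n) eos) ! q"
    proof (cases "q < n")
      case True
      then have "xs ! q \<in> {0,1}" using n by (metis nth_mem subsetD)
      then show ?thesis using True n by (auto simp: ys_def nth_append g_def eoq_def eos_def nth_Cons')
    next
      case False
      then show ?thesis using q' n
        by (auto simp: ys_def nth_append g_def eoq_def eos_def nth_Cons')
    qed
    finally show "drop n ((run stp ^^ n) ys) ! q = (xs @ replicate (n' + 1 - n) eos) ! q" .
  qed
  then show "let out = run [] ((run stp ^^ n) (run [] (xs @ [eoq] @ replicate n' eos)))
         in length out = n + 1 + n' \<and> drop n out = xs @ replicate (n' + 1 - n) eos"
    using I ly unfolding r0 Let_def ys_def[symmetric] by simp
qed

end
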